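(* Let $u,v$ be two different essential vertices of a multigraph $H$, and let $P$ be any simple path in $H$ from $u$ to $v$. Then every edge traversed by $P$ is essential.
   Context: Multigraphs are undirected and may contain parallel edges and self-loops (a self-loop is a cycle of length one, two parallel edges form a cycle of length two). An edge $e$ of $H$ is essential if it lies on a cycle of $H$, or it is a bridge whose removal creates two new connected components each containing a cycle. An incidence is a pair $(u,e)$ with $e$ incident to $u$, a self-loop at $u$ giving two incidences. A vertex is essential if it participates in at least three incidences with essential edges. *)

theory Defs
  imports Main
begin

text \<open>A finite multigraph: vertex set V, edge set E (edges are abstract objects of type 'e,
  so parallel edges are allowed), and an endpoint map; ends e = {x,y} with x \<noteq> y for
  an ordinary edge, ends e = {x} for a self-loop at x.\<close>

definition multigraph :: "'v set \<Rightarrow> 'e set \<Rightarrow> ('e \<Rightarrow> 'v set) \<Rightarrow> bool" where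
  "multigraph V E ends \<longleftrightarrow> finite V \<and> finite E \<and>
     (\<forall>e\<in>E. ends e \<noteq> {} \<and> ends e \<subseteq> V \<and> card (ends e) \<le> 2)"

text \<open>A cycle of length n \<ge> 1: distinct vertices vs!0..vs!(n-1), distinct edges, edge i joins
  vs!i and vs!((i+1) mod n). n = 1 is a self-loop, n = 2 a pair of parallel edges.\<close>

definition is_cycle :: "'e set \<Rightarrow> ('e \<Rightarrow> 'v set) \<Rightarrow> 'v list \<Rightarrow> 'e list \<Rightarrow> bool" where
  "is_cycle E ends vs es \<longleftrightarrow> es \<noteq> [] \<and> length vs = length es \<and> distinct vs \<and> distinct es \<and>
     set es \<subseteq> E \<and>
     (\<forall>i<length es. ends (es ! i) = {vs ! i, vs ! ((i + 1) mod length es)})"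

definition on_cycle :: "'e set \<Rightarrow> ('e \<Rightarrow> 'v set) \<Rightarrow> 'e \<Rightarrow> bool" where
  "on_cycle E ends e \<longleftrightarrow> (\<exists>vs es. is_cycle E ends vs es \<and> e \<in> set es)"

inductive reach :: "'e set \<Rightarrow> ('e \<Rightarrow> 'v set) \<Rightarrow> 'v \<Rightarrow> 'v \<Rightarrow> bool"
  for E ends where
  reach_refl: "reach E ends x x"
| reach_step: "reach E ends x y \<Longrightarrow> e \<in> E \<Longrightarrow> ends e = {y, z} \<Longrightarrow> reach E ends x z"

definition component_has_cycle :: "'e set \<Rightarrow> ('e \<Rightarrow> 'v set) \<Rightarrow> 'v \<Rightarrow> bool" where
  "component_has_cycle E ends x \<longleftrightarrow>
     (\<exists>vs es. is_cycle E ends vs es \<and> (\<forall>w\<in>set vs. reach E ends x w))"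

definition essential_edge :: "'e set \<Rightarrow> ('e \<Rightarrow> 'v set) \<Rightarrow> 'e \<Rightarrow> bool" where
  "essential_edge E ends e \<longleftrightarrow> e \<in> E \<and>
     (on_cycle E ends e \<or>
      (\<exists>x y. x \<noteq> y \<and> ends e = {x, y} \<and> \<not> reach (E - {e}) ends x y \<and>
             component_has_cycle (E - {e}) ends x \<and> component_has_cycle (E - {e}) ends y))"

definition essential_incidences :: "'e set \<Rightarrow> ('e \<Rightarrow> 'v set) \<Rightarrow> 'v \<Rightarrow> nat" where
  "essential_incidences E ends u =
     (\<Sum>e\<in>{e\<in>E. essential_edge E ends e \<and> u \<in> ends e}. if ends e = {u} then 2 else 1)"

definition essential_vertex :: "'v set \<Rightarrow> 'e set \<Rightarrow> ('e \<Rightarrow> 'v set) \<Rightarrow> 'v \<Rightarrow> bool" where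
  "essential_vertex V E ends u \<longleftrightarrow> u \<in> V \<and> essential_incidences E ends u \<ge> 3"

definition simple_path :: "'e set \<Rightarrow> ('e \<Rightarrow> 'v set) \<Rightarrow> 'v list \<Rightarrow> 'e list \<Rightarrow> 'v \<Rightarrow> 'v \<Rightarrow> bool" where
  "simple_path E ends vs es u v \<longleftrightarrow> vs \<noteq> [] \<and> length vs = length es + 1 \<and> distinct vs \<and>
     hd vs = u \<and> last vs = v \<and> set es \<subseteq> E \<and>
     (\<forall>i<length es. ends (es ! i) = {vs ! i, vs ! (i + 1)})"

end

theory Submission
  imports Defs
begin

lemma reach_trans:
  assumes "reach E ends y z" shows "reach E ends x y \<Longrightarrow> reach E ends x z"
  using assms by (induction rule: reach.induct) (auto intro: reach.intros)

lemma reach_edge: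
  assumes "e \<in> E" "ends e = {a,b}"
  shows "reach E ends a b" "reach E ends b a"
proof -
  show "reach E ends a b" using reach.reach_step[of E ends a a e b, OF reach.reach_refl assms] .
  have "ends e = {b,a}" using assms(2) by (simp add: insert_commute)
  then show "reach E ends b a" using reach.reach_step[of E ends b b e a, OF reach.reach_refl assms(1)] by blast
qed

lemma reach_sym:
  assumes "reach E ends x y" shows "reach E ends y x"
  using assms
proof (induction rule: reach.induct)
  case (reach_refl x) then show ?case by (rule reach.intros)
next
  case (reach_step x y e z)
  have "reach E ends z y" using reach_edge(2)[of e E ends y z] reach_step.hyps by blast
  then show ?case using reach_trans[of E ends y x z] reach_step.IH by blast
qed

lemma reach_mono:
  assumes "reach E1 ends x y" "E1 \<subseteq> E2" shows "reach E2 ends x y"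
  using assms by (induction rule: reach.induct) (auto intro: reach.intros)

lemma reach_split:
  assumes "reach E ends a w"
  shows "reach (E - {e}) ends a w \<or> (\<exists>z\<in>ends e. reach E ends a z)"
  using assms
proof (induction rule: reach.induct)
  case (reach_refl x) then show ?case by (auto intro: reach.intros)
next
  case (reach_step x y g z)
  show ?case
  proof (cases "reach (E - {e}) ends x y")
    case True
    show ?thesis
    proof (cases "g = e")
      case True
      have "reach E ends x z" using reach_step.hyps by (blast intro: reach.reach_step)
      then show ?thesis using True reach_step.hyps(3) by auto
    next
      case False
      then have "g \<in> E - {e}" using reach_step.hyps by auto
      then have "reach (E - {e}) ends x z" using \<open>reach (E - {e}) ends x y\<close> reach_step.hyps(3)
        using reach.reach_step[of "E - {e}" ends x y g z] by blast
      then show ?thesis by blast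
    qed
  next
    case False then show ?thesis using reach_step by auto
  qed
qed

lemma walk_reach:
  assumes "\<And>k. lo \<le> k \<Longrightarrow> k < hi \<Longrightarrow> f k \<in> E \<and> ends (f k) = {g k, g (Suc k)}"
    and "lo \<le> j" "j \<le> hi"
  shows "reach E ends (g lo) (g j)"
  using assms(2,3)
proof (induction j rule: dec_induct)
  case base show ?case by (rule reach.reach_refl)
next
  case (step n)
  have hi: "n < hi" using step by auto
  have "f n \<in> E" "ends (f n) = {g n, g (Suc n)}" using assms(1)[of n] hi step.hyps by auto
  moreover have "reach E ends (g lo) (g n)" using step.IH hi by auto
  ultimately show ?case by (blast intro: reach.reach_step)
qed

lemma cycle_reach0:
  assumes "is_cycle E ends cvs ces" "k < length cvs"
  shows "reach E ends (cvs ! 0) (cvs ! k)"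
proof -
  have "\<And>j. 0 \<le> j \<Longrightarrow> j < length cvs - 1 \<Longrightarrow> ces ! j \<in> E \<and> ends (ces ! j) = {cvs ! j, cvs ! Suc j}"
  proof -
    fix j assume j: "j < length cvs - 1"
    have c: "length cvs = length ces" "set ces \<subseteq> E"
      "\<forall>i<length ces. ends (ces ! i) = {cvs ! i, cvs ! ((i + 1) mod length ces)}"
      using assms(1) unfolding is_cycle_def by auto
    have "j < length ces" "(j + 1) mod length ces = Suc j" using j c(1) by auto
    then show "ces ! j \<in> E \<and> ends (ces ! j) = {cvs ! j, cvs ! Suc j}"
      using c(2,3) nth_mem by (metis subsetD)
  qed
  then show ?thesis using walk_reach[of 0 "length cvs - 1" "\<lambda>j. ces ! j" E ends "\<lambda>j. cvs ! j" k] assms(2)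
    by simp
qed

lemma cycle_reach:
  assumes "is_cycle E ends cvs ces" "w \<in> set cvs" "w' \<in> set cvs"
  shows "reach E ends w w'"
proof -
  obtain i j where "i < length cvs" "cvs ! i = w" "j < length cvs" "cvs ! j = w'"
    using assms(2,3) by (metis in_set_conv_nth)
  then show ?thesis using cycle_reach0[OF assms(1)] reach_sym reach_trans by metis
qed

lemma cycle_vertex:
  assumes "is_cycle E ends cvs ces" "f \<in> set ces" "u \<in> ends f"
  shows "u \<in> set cvs"
proof -
  obtain i where i: "i < length ces" "ces ! i = f" using assms(2) by (metis in_set_conv_nth)
  then have "ends f = {cvs ! i, cvs ! ((i + 1) mod length ces)}" using assms(1) unfolding is_cycle_def by auto
  moreover have "length cvs = length ces" "ces \<noteq> []" using assms(1) unfolding is_cycle_def by auto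
  moreover have "length ces > 0" using i by auto
  moreover have "(i + 1) mod length ces < length ces" using calculation by simp
  ultimately show ?thesis using assms(3) i by (metis empty_iff insert_iff nth_mem)
qed

lemma path_distinct_edges:
  assumes "simple_path E ends vs es x y"
  shows "distinct es"
proof -
  have p: "length vs = length es + 1" "distinct vs"
    "\<forall>i<length es. ends (es ! i) = {vs ! i, vs ! (i + 1)}"
    using assms unfolding simple_path_def by auto
  show ?thesis unfolding distinct_conv_nth
  proof (intro allI impI)
    fix i j assume ij: "i < length es" "j < length es" "i \<noteq> j"
    show "es ! i \<noteq> es ! j"
    proof
      assume eq: "es ! i = es ! j"
      have "vs ! i \<in> {vs ! j, vs ! (j + 1)}" using p(3) ij eq by (metis insertI1)
      moreover have "vs ! i \<noteq> vs ! j" using p ij by (simp add: nth_eq_iff_index_eq)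
      moreover have "vs ! (i+1) \<in> {vs ! j, vs ! (j + 1)}" using p(3) ij eq by (metis insertI1 insertI2)
      moreover have "vs ! (i+1) \<noteq> vs ! (j+1)" using p ij by (simp add: nth_eq_iff_index_eq)
      moreover have "vs ! i \<noteq> vs ! (i+1)" using p ij by (simp add: nth_eq_iff_index_eq)
      ultimately have "vs ! i = vs ! (j+1)" "vs ! (i+1) = vs ! j" by auto
      then have "i = j + 1" "i + 1 = j" using p ij by (simp_all add: nth_eq_iff_index_eq)
      then show False by simp
    qed
  qed
qed

lemma reach_path:
  assumes "reach E ends x y"
  shows "\<exists>vs es. simple_path E ends vs es x y"
  using assms
proof (induction rule: reach.induct)
  case (reach_refl x)
  have "simple_path E ends [x] [] x x" unfolding simple_path_def by auto
  then show ?case by blast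
next
  case (reach_step x y g z)
  then obtain vs es where p: "simple_path E ends vs es x y" by blast
  have p': "vs \<noteq> []" "length vs = length es + 1" "distinct vs"
     "hd vs = x" "last vs = y" "set es \<subseteq> E"
     "\<forall>i<length es. ends (es ! i) = {vs ! i, vs ! (i + 1)}"
    using p unfolding simple_path_def by auto
  show ?case
  proof (cases "z \<in> set vs")
    case True
    then obtain k where k: "k < length vs" "vs ! k = z" by (metis in_set_conv_nth)
    have "simple_path E ends (take (Suc k) vs) (take k es) x z"
      unfolding simple_path_def
    proof (intro conjI)
      show "take (Suc k) vs \<noteq> []" using p'(1) by simp
      show "length (take (Suc k) vs) = length (take k es) + 1" using k p'(2) by simp
      show "distinct (take (Suc k) vs)" using p'(3) by simp
      show "hd (take (Suc k) vs) = x" using p'(4) by (metis hd_take zero_less_Suc)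
      show "last (take (Suc k) vs) = z" using k by (simp add: take_Suc_conv_app_nth)
      show "set (take k es) \<subseteq> E" using order_trans[OF set_take_subset[of k es] p'(6)] .
      show "\<forall>i<length (take k es). ends (take k es ! i) = {take (Suc k) vs ! i, take (Suc k) vs ! (i + 1)}"
      proof (intro allI impI)
        fix i assume "i < length (take k es)"
        then have i: "i < k" "i < length es" by auto
        then show "ends (take k es ! i) = {take (Suc k) vs ! i, take (Suc k) vs ! (i + 1)}"
          using p'(7) by simp
      qed
    qed
    then show ?thesis by blast
  next
    case False
    have "simple_path E ends (vs @ [z]) (es @ [g]) x z"
      unfolding simple_path_def
    proof (intro conjI)
      show "vs @ [z] \<noteq> []" by simp
      show "length (vs @ [z]) = length (es @ [g]) + 1" using p'(2) by simp
      show "distinct (vs @ [z])" using p'(3) False by simp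
      show "hd (vs @ [z]) = x" using p'(1,4) by simp
      show "last (vs @ [z]) = z" by simp
      show "set (es @ [g]) \<subseteq> E" using p'(6) reach_step.hyps by simp
      show "\<forall>i<length (es @ [g]). ends ((es @ [g]) ! i) = {(vs @ [z]) ! i, (vs @ [z]) ! (i + 1)}"
      proof (intro allI impI)
        fix i assume i: "i < length (es @ [g])"
        show "ends ((es @ [g]) ! i) = {(vs @ [z]) ! i, (vs @ [z]) ! (i + 1)}"
        proof (cases "i < length es")
          case True then show ?thesis using p'(2,7) by (simp add: nth_append)
        next
          case False
          then have ii: "i = length es" using i by simp
          have "vs ! length es = y" using p'(1,2,5) by (simp add: last_conv_nth)
          then show ?thesis using ii p'(2) reach_step.hyps(3) by (simp add: nth_append)
        qed
      qed
    qed
    then show ?thesis by blast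
  qed
qed

lemma path_cycle:
  assumes "simple_path E' ends vs es x y" "x \<noteq> y" "e \<notin> set es" "e \<in> E"
    "ends e = {x, y}" "E' \<subseteq> E"
  shows "is_cycle E ends vs (es @ [e])"
proof -
  have p': "vs \<noteq> []" "length vs = length es + 1" "distinct vs"
     "hd vs = x" "last vs = y" "set es \<subseteq> E'"
     "\<forall>i<length es. ends (es ! i) = {vs ! i, vs ! (i + 1)}"
    using assms(1) unfolding simple_path_def by auto
  have de: "distinct es" using path_distinct_edges[OF assms(1)] .
  show ?thesis unfolding is_cycle_def
  proof (intro conjI)
    show "es @ [e] \<noteq> []" by simp
    show "length vs = length (es @ [e])" using p'(2) by simp
    show "distinct vs" by (rule p'(3))
    show "distinct (es @ [e])" using de assms(3) by simp
    show "set (es @ [e]) \<subseteq> E" using p'(6) assms(4,6) by auto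
    show "\<forall>i<length (es @ [e]). ends ((es @ [e]) ! i) = {vs ! i, vs ! ((i + 1) mod length (es @ [e]))}"
    proof (intro allI impI)
      fix i assume i: "i < length (es @ [e])"
      show "ends ((es @ [e]) ! i) = {vs ! i, vs ! ((i + 1) mod length (es @ [e]))}"
      proof (cases "i < length es")
        case True then show ?thesis using p'(7) by (simp add: nth_append)
      next
        case False
        then have ii: "i = length es" using i by simp
        have "vs ! length es = y" using p'(1,2,5) by (simp add: last_conv_nth)
        moreover have "vs ! 0 = x" using p'(1,4) by (simp add: hd_conv_nth)
        ultimately show ?thesis using ii assms(5) by (simp add: nth_append insert_commute)
      qed
    qed
  qed
qed

lemma not_cycle_bridge:
  assumes "e \<in> E" "\<not> on_cycle E ends e" "ends e = {x, y}" "x \<noteq> y"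
  shows "\<not> reach (E - {e}) ends x y"
proof
  assume "reach (E - {e}) ends x y"
  then obtain vs es where p: "simple_path (E - {e}) ends vs es x y" using reach_path[of "E - {e}" ends x y] by blast
  have "e \<notin> set es" using p unfolding simple_path_def by auto
  then have "is_cycle E ends vs (es @ [e])" using path_cycle[OF p assms(4) _ assms(1,3)] by auto
  moreover have "e \<in> set (es @ [e])" by simp
  ultimately show False using assms(2) unfolding on_cycle_def by blast
qed

lemma cyc_avoid:
  assumes "is_cycle E' ends cvs ces" "E' \<subseteq> E" "\<not> on_cycle E ends e"
  shows "is_cycle (E - {e}) ends cvs ces"
proof -
  have "is_cycle E ends cvs ces" using assms(1,2) unfolding is_cycle_def by auto
  then have "e \<notin> set ces" using assms(3) unfolding on_cycle_def by blast
  then show ?thesis using assms(1,2) unfolding is_cycle_def by auto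
qed

lemma key:
  assumes ne: "\<not> on_cycle E ends e" and ee: "e \<in> E" "ends e = {x, y}"
    and nc: "\<not> component_has_cycle (E - {e}) ends x"
    and f: "f \<in> E" "f \<noteq> e" "u \<in> ends f" and ru: "reach (E - {e}) ends x u"
  shows "\<not> essential_edge E ends f"
proof
  assume ess: "essential_edge E ends f"
  have nocyc: False if "reach (E - {e}) ends x w" "w \<in> set cvs" "is_cycle (E - {e}) ends cvs ces" for w cvs ces
  proof -
    have "\<forall>w'\<in>set cvs. reach (E - {e}) ends x w'"
    proof
      fix w' assume "w' \<in> set cvs"
      then have "reach (E - {e}) ends w w'" using cycle_reach[OF that(3) that(2)] by blast
      then show "reach (E - {e}) ends x w'" using reach_trans[OF _ that(1)] by blast
    qed
    then show False using nc that(3) unfolding component_has_cycle_def by blast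
  qed
  have "on_cycle E ends f \<or>
      (\<exists>a b. a \<noteq> b \<and> ends f = {a, b} \<and> \<not> reach (E - {f}) ends a b \<and>
             component_has_cycle (E - {f}) ends a \<and> component_has_cycle (E - {f}) ends b)"
    using ess unfolding essential_edge_def by blast
  then show False
  proof
    assume "on_cycle E ends f"
    then obtain cvs ces where c: "is_cycle E ends cvs ces" "f \<in> set ces" unfolding on_cycle_def by blast
    have "u \<in> set cvs" using cycle_vertex[OF c f(3)] .
    moreover have "is_cycle (E - {e}) ends cvs ces" using cyc_avoid[OF c(1) _ ne] by simp
    ultimately show False using nocyc ru by blast
  next
    assume "\<exists>a b. a \<noteq> b \<and> ends f = {a, b} \<and> \<not> reach (E - {f}) ends a b \<and>
             component_has_cycle (E - {f}) ends a \<and> component_has_cycle (E - {f}) ends b"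
    then obtain a b where ab: "a \<noteq> b" "ends f = {a, b}" "\<not> reach (E - {f}) ends a b"
      "component_has_cycle (E - {f}) ends a" "component_has_cycle (E - {f}) ends b" by blast
    have fe: "f \<in> E - {e}" using f by simp
    have rab: "reach (E - {e}) ends x a" "reach (E - {e}) ends x b"
    proof -
      have "u = a \<or> u = b" using f(3) ab(2) by auto
      moreover have "reach (E - {e}) ends a b" "reach (E - {e}) ends b a"
        using reach_edge[of f "E - {e}" ends a b, OF fe ab(2)] by auto
      ultimately show "reach (E - {e}) ends x a" "reach (E - {e}) ends x b"
        using ru reach_trans[OF _ ru] by auto
    qed
    have side: "\<exists>z\<in>ends e. reach (E - {f}) ends c z"
      if rc: "reach (E - {e}) ends x c" and hc: "component_has_cycle (E - {f}) ends c" for c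
    proof (rule ccontr)
      assume nz: "\<not> (\<exists>z\<in>ends e. reach (E - {f}) ends c z)"
      obtain cvs ces where cc: "is_cycle (E - {f}) ends cvs ces" "\<forall>w\<in>set cvs. reach (E - {f}) ends c w"
        using hc unfolding component_has_cycle_def by blast
      have "cvs \<noteq> []" using cc(1) unfolding is_cycle_def by auto
      then have h: "hd cvs \<in> set cvs" by simp
      then have rh: "reach (E - {f}) ends c (hd cvs)" using cc(2) by blast
      have "reach (E - {f} - {e}) ends c (hd cvs)" using reach_split[OF rh, of e] nz by blast
      then have "reach (E - {e}) ends c (hd cvs)" by (rule reach_mono) auto
      then have "reach (E - {e}) ends x (hd cvs)" using reach_trans[OF _ rc] by blast
      moreover have "is_cycle (E - {e}) ends cvs ces" using cyc_avoid[OF cc(1) _ ne] by auto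
      ultimately show False using nocyc h by blast
    qed
    obtain za where za: "za \<in> ends e" "reach (E - {f}) ends a za" using side[OF rab(1) ab(4)] by blast
    obtain zb where zb: "zb \<in> ends e" "reach (E - {f}) ends b zb" using side[OF rab(2) ab(5)] by blast
    have ef: "e \<in> E - {f}" using ee f by auto
    have "reach (E - {f}) ends za zb"
    proof (cases "za = zb")
      case True then show ?thesis by (simp add: reach.reach_refl)
    next
      case False
      then have "ends e = {za, zb}" using za zb ee(2) by auto
      then show ?thesis using reach_edge(1)[of e "E - {f}" ends za zb, OF ef] by blast
    qed
    then have "reach (E - {f}) ends a zb" using reach_trans[OF _ za(2)] by blast
    moreover have "reach (E - {f}) ends zb b" using reach_sym[OF zb(2)] .
    ultimately have "reach (E - {f}) ends a b" using reach_trans by metis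
    then show False using ab(3) by blast
  qed
qed

lemma count_bound:
  assumes "\<not> on_cycle E ends e" "e \<in> E" "ends e = {x, y}" "x \<noteq> y"
    "\<not> component_has_cycle (E - {e}) ends x" "reach (E - {e}) ends x u"
  shows "essential_incidences E ends u \<le> 1"
proof -
  let ?S = "{f\<in>E. essential_edge E ends f \<and> u \<in> ends f}"
  have sub: "?S \<subseteq> {e}" using key[OF assms(1,2,3,5) _ _ _ assms(6)] by blast
  have ne: "ends e \<noteq> {u}" using assms(3,4) by auto
  have "essential_incidences E ends u = (\<Sum>f\<in>?S. if ends f = {u} then 2 else 1)"
    unfolding essential_incidences_def by simp
  also have "\<dots> \<le> (\<Sum>f\<in>{e}. if ends f = {u} then 2 else (1::nat))"
    by (rule sum_mono2) (use sub in auto)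
  also have "\<dots> = 1" using ne by simp
  finally show ?thesis .
qed

theorem lemma5p3:
  fixes V :: "'v set" and E :: "'e set" and ends :: "'e \<Rightarrow> 'v set"
  assumes "multigraph V E ends"
    and "essential_vertex V E ends u" and "essential_vertex V E ends v" and "u \<noteq> v"
    and "simple_path E ends vs es u v"
  shows "\<forall>e\<in>set es. essential_edge E ends e"
proof
  fix e assume "e \<in> set es"
  then obtain i where i: "i < length es" "es ! i = e" by (metis in_set_conv_nth)
  have p': "vs \<noteq> []" "length vs = length es + 1" "distinct vs"
     "hd vs = u" "last vs = v" "set es \<subseteq> E"
     "\<forall>i<length es. ends (es ! i) = {vs ! i, vs ! (i + 1)}"
    using assms(5) unfolding simple_path_def by auto
  have de: "distinct es" using path_distinct_edges[OF assms(5)] .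
  have eE: "e \<in> E" using i p'(6) nth_mem by blast
  define x where "x = vs ! i"
  define y where "y = vs ! (i + 1)"
  have exy: "ends e = {x, y}" using p'(7) i unfolding x_def y_def by blast
  have xy: "x \<noteq> y" using p'(2,3) i unfolding x_def y_def by (simp add: nth_eq_iff_index_eq)
  show "essential_edge E ends e"
  proof (cases "on_cycle E ends e")
    case True then show ?thesis using eE unfolding essential_edge_def by blast
  next
    case False
    have nr: "\<not> reach (E - {e}) ends x y" using not_cycle_bridge[OF eE False exy xy] .
    have step: "es ! k \<in> E - {e} \<and> ends (es ! k) = {vs ! k, vs ! Suc k}" if "k < length es" "k \<noteq> i" for k
    proof -
      have "es ! k \<noteq> e" using de i that by (metis nth_eq_iff_index_eq)
      moreover have "es ! k \<in> E" using that p'(6) nth_mem by blast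
      ultimately show ?thesis using p'(7) that by simp
    qed
    have r1: "reach (E - {e}) ends (vs ! 0) (vs ! i)"
      using walk_reach[of 0 i "\<lambda>k. es ! k" "E - {e}" ends "\<lambda>k. vs ! k" i] step i by simp
    have r2: "reach (E - {e}) ends (vs ! (i + 1)) (vs ! length es)"
      using walk_reach[of "i + 1" "length es" "\<lambda>k. es ! k" "E - {e}" ends "\<lambda>k. vs ! k" "length es"] step i by simp
    have v0: "vs ! 0 = u" using p'(1,4) by (simp add: hd_conv_nth)
    have vn: "vs ! length es = v" using p'(1,2,5) by (simp add: last_conv_nth)
    have ru: "reach (E - {e}) ends x u" using reach_sym[OF r1[unfolded v0]] unfolding x_def .
    have rv: "reach (E - {e}) ends y v" using r2 unfolding y_def vn .
    have cx: "component_has_cycle (E - {e}) ends x"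
    proof (rule ccontr)
      assume "\<not> component_has_cycle (E - {e}) ends x"
      then have "essential_incidences E ends u \<le> 1" using count_bound[OF False eE exy xy _ ru] by blast
      then show False using assms(2) unfolding essential_vertex_def by simp
    qed
    have cy: "component_has_cycle (E - {e}) ends y"
    proof (rule ccontr)
      assume "\<not> component_has_cycle (E - {e}) ends y"
      moreover have "ends e = {y, x}" using exy by (simp add: insert_commute)
      ultimately have "essential_incidences E ends v \<le> 1" using count_bound[OF False eE _ _ _ rv] xy by auto
      then show False using assms(3) unfolding essential_vertex_def by simp
    qed
    show ?thesis unfolding essential_edge_def using eE xy exy nr cx cy by blast
  qed
qed

end
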